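(* Let $\mathcal{M}\subseteq\mathbb{R}^d$ be a compact embedded $C^2$-submanifold without boundary with reach $\tau_{\mathcal{M}}>0$, let $\tau\in(0,\tau_{\mathcal{M}})$ and $\eta>0$. Then $$\inf_{x\in\mathcal{T}(\tau)}\Big(\tfrac12\operatorname{dist}_{\mathcal{M}\setminus B_\eta(\pi(x))}(x)^2-\tfrac12\operatorname{dist}_{\mathcal{M}}(x)^2\Big)\ge\frac12\,\frac{\tau_{\mathcal{M}}-\tau}{\tau_{\mathcal{M}}+\tau}\,\eta^2>0.$$
   Context: Reach $\tau_{\mathcal{M}}$: largest $\tau\ge0$ such that $(p,v)\mapsto p+v$ on $\{(p,v):p\in\mathcal{M},v\in N_p\mathcal{M},\|v\|<\tau\}$ is a diffeomorphism onto its image; $\mathcal{T}(\tau)=\{p+v:p\in\mathcal{M},v\in N_p\mathcal{M},\|v\|<\tau\}$; $\pi(x)$ is the unique closest point of $\mathcal{M}$ to $x\in\mathcal{T}(\tau_{\mathcal{M}})$. For a set $A$, $\operatorname{dist}_A(x)=\inf_{a\in A}\|x-a\|$ (with $\inf\emptyset=+\infty$), and $B_\eta(p)$ is the open Euclidean ball of radius $\eta$ centered at $p$. *)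

theory Defs
  imports "HOL-Analysis.Analysis"
begin

definition C1_on :: "'a::real_normed_vector set \<Rightarrow> ('a \<Rightarrow> 'b::real_normed_vector) \<Rightarrow> bool" where
  "C1_on U f \<longleftrightarrow> (\<exists>f'. (\<forall>x\<in>U. (f has_derivative blinfun_apply (f' x)) (at x)) \<and> continuous_on U f')"

definition C2_on :: "'a::real_normed_vector set \<Rightarrow> ('a \<Rightarrow> 'b::real_normed_vector) \<Rightarrow> bool" where
  "C2_on U f \<longleftrightarrow> (\<exists>f'. (\<forall>x\<in>U. (f has_derivative blinfun_apply (f' x)) (at x)) \<and> C1_on U f')"

definition C2_submanifold :: "nat \<Rightarrow> 'a::euclidean_space set \<Rightarrow> bool" where
  "C2_submanifold k M \<longleftrightarrow> k \<le> DIM('a) \<and>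
     (\<forall>p\<in>M. \<exists>U (\<phi>::'a \<Rightarrow> 'a) L. open U \<and> p \<in> U \<and> subspace L \<and> dim L = k \<and>
        C2_on U \<phi> \<and> inj_on \<phi> U \<and> open (\<phi> ` U) \<and>
        (\<exists>\<psi>. C2_on (\<phi> ` U) \<psi> \<and> (\<forall>x\<in>U. \<psi> (\<phi> x) = x)) \<and>
        \<phi> ` (M \<inter> U) = \<phi> ` U \<inter> L)"

definition tangent_space :: "'a::euclidean_space set \<Rightarrow> 'a \<Rightarrow> 'a set" where
  "tangent_space M p = {v. \<exists>\<gamma> (e::real). e > 0 \<and> \<gamma> ` ball 0 e \<subseteq> M \<and> \<gamma> 0 = p \<and>
        (\<gamma> has_vector_derivative v) (at 0)}"

definition normal_space :: "'a::euclidean_space set \<Rightarrow> 'a \<Rightarrow> 'a set" where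
  "normal_space M p = {v. \<forall>w\<in>tangent_space M p. v \<bullet> w = 0}"

definition normal_bundle :: "'a::euclidean_space set \<Rightarrow> real \<Rightarrow> ('a \<times> 'a) set" where
  "normal_bundle M t = {(p, v). p \<in> M \<and> v \<in> normal_space M p \<and> norm v < t}"

definition tube :: "'a::euclidean_space set \<Rightarrow> real \<Rightarrow> 'a set" where
  "tube M t = (\<lambda>(p, v). p + v) ` normal_bundle M t"

definition tube_diffeo :: "'a::euclidean_space set \<Rightarrow> real \<Rightarrow> bool" where
  "tube_diffeo M t \<longleftrightarrow> inj_on (\<lambda>(p, v). p + v) (normal_bundle M t) \<and> open (tube M t) \<and>
     (\<exists>g :: 'a \<Rightarrow> 'a \<times> 'a. C1_on (tube M t) g \<and>
        (\<forall>(p, v)\<in>normal_bundle M t. g (p + v) = (p, v)))"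

definition is_reach :: "'a::euclidean_space set \<Rightarrow> real \<Rightarrow> bool" where
  "is_reach M r \<longleftrightarrow> r \<ge> 0 \<and> tube_diffeo M r \<and> (\<forall>t\<ge>0. tube_diffeo M t \<longrightarrow> t \<le> r)"

definition proj :: "'a::euclidean_space set \<Rightarrow> 'a \<Rightarrow> 'a" where
  "proj M x = (THE p. p \<in> M \<and> dist x p = infdist x M)"

definition dist_set :: "'a::metric_space set \<Rightarrow> 'a \<Rightarrow> ereal" where
  "dist_set A x = (if A = {} then \<infinity> else ereal (infdist x A))"

end

theory Submission imports Defs begin

lemma nearest_normal:
  fixes M :: "'a::euclidean_space set"
  assumes q: "q \<in> M" and near: "\<forall>z\<in>M. dist y q \<le> dist y z"
  shows "y - q \<in> normal_space M q"
  unfolding normal_space_def tangent_space_def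
proof (intro CollectI ballI)
  fix w assume "w \<in> {v. \<exists>\<gamma> (e::real). e > 0 \<and> \<gamma> ` ball 0 e \<subseteq> M \<and> \<gamma> 0 = q \<and>
        (\<gamma> has_vector_derivative v) (at 0)}"
  then obtain \<gamma> and e :: real where e: "e > 0" and sub: "\<gamma> ` ball 0 e \<subseteq> M" and g0: "\<gamma> 0 = q"
    and d: "(\<gamma> has_vector_derivative w) (at 0)" by blast
  have D: "((\<lambda>s. (y - \<gamma> s) \<bullet> (y - \<gamma> s)) has_real_derivative (- 2 * ((y - q) \<bullet> w))) (at 0)"
  proof -
    have d2: "((\<lambda>s. y - \<gamma> s) has_vector_derivative (- w)) (at 0)"
      using d by (auto intro!: derivative_eq_intros)
    have d3: "((\<lambda>s. y - \<gamma> s) has_derivative (\<lambda>h. h *\<^sub>R (- w))) (at 0)"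
      using d2 by (simp add: has_vector_derivative_def)
    have "((\<lambda>s. (y - \<gamma> s) \<bullet> (y - \<gamma> s)) has_derivative (\<lambda>h. (- 2 * ((y - q) \<bullet> w)) * h)) (at 0)" (is "(_ has_derivative ?D) _")
      by (rule has_derivative_eq_rhs[OF has_derivative_inner[OF d3 d3]])
        (auto simp: fun_eq_iff g0 inner_commute algebra_simps)
    moreover have "?D = (*) (- 2 * ((y - q) \<bullet> w))" by (auto simp: fun_eq_iff)
    ultimately show ?thesis unfolding has_field_derivative_def by simp
  qed
  have "- 2 * ((y - q) \<bullet> w) = 0"
  proof (rule DERIV_local_min[OF D e], intro allI impI)
    fix s :: real assume "\<bar>0 - s\<bar> < e"
    then have "\<gamma> s \<in> M" using sub by (auto simp: dist_real_def)
    then have "dist y q \<le> dist y (\<gamma> s)" using near by auto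
    then have "norm (y - q) ^ 2 \<le> norm (y - \<gamma> s) ^ 2"
      by (simp add: dist_norm power_mono)
    then show "(y - \<gamma> 0) \<bullet> (y - \<gamma> 0) \<le> (y - \<gamma> s) \<bullet> (y - \<gamma> s)"
      using g0 by (simp add: power2_norm_eq_inner)
  qed
  then show "(y - q) \<bullet> w = 0" by simp
qed

lemma mem_nb: "(a, b) \<in> normal_bundle M t \<longleftrightarrow> a \<in> M \<and> b \<in> normal_space M a \<and> norm b < t"
  by (simp add: normal_bundle_def)

lemma nearest_unique:
  fixes M :: "'a::euclidean_space set"
  assumes inj: "inj_on (\<lambda>(p, v). p + v) (normal_bundle M t)"
    and pv: "(p, v) \<in> normal_bundle M t" and q: "q \<in> M"
    and near: "\<forall>z\<in>M. dist (p + v) q \<le> dist (p + v) z"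
  shows "q = p"
proof -
  have pM: "p \<in> M" and nv: "norm v < t" using pv unfolding mem_nb by simp_all
  have n1: "p + v - q \<in> normal_space M q" using nearest_normal[OF q near] .
  have "dist (p + v) q \<le> dist (p + v) p" using near pM by blast
  then have n2: "norm (p + v - q) < t" using nv by (simp add: dist_norm)
  have A: "(q, p + v - q) \<in> normal_bundle M t" unfolding mem_nb using q n1 n2 by blast
  have eq: "(\<lambda>(p, v). p + v) (q, p + v - q) = (\<lambda>(p, v). p + v) (p, v)" by simp
  have "(q, p + v - q) = (p, v)" by (rule inj_onD[OF inj eq A pv])
  then have "fst (q, p + v - q) = fst (p, v)" by (rule arg_cong)
  then show ?thesis by (simp only: fst_conv)
qed

lemma nearest_exists:
  fixes M :: "'a::euclidean_space set"
  assumes "compact M" "M \<noteq> {}"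
  obtains q where "q \<in> M" "\<forall>z\<in>M. dist y q \<le> dist y z" "infdist y M = dist y q"
proof -
  obtain q where "q \<in> M" "infdist y M = dist y q"
    using infdist_attains_inf[OF compact_imp_closed[OF assms(1)] assms(2)] by metis
  then show ?thesis using that infdist_le by metis
qed

lemma aux_ineq: "(A::real) \<le> C \<Longrightarrow> x = (A + B - C) / 2 \<Longrightarrow> x = y \<Longrightarrow> 2 * y \<le> B"
  by (simp add: field_simps)

lemma aux_eq: "(x::real) = (A + B - C) / 2 \<Longrightarrow> C = A - 2 * x + B"
  by (simp add: field_simps)

lemma aux_fin: "(K::real) = N - 2 * W \<Longrightarrow> E = V - 2 * x + N \<Longrightarrow> x \<le> W \<Longrightarrow> V + K \<le> E"
  by linarith

lemma federer:
  fixes M :: "'a::euclidean_space set"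
  assumes cM: "compact M" and inj: "inj_on (\<lambda>(p, v). p + v) (normal_bundle M tM)"
    and pv: "(p, v) \<in> normal_bundle M t" and t: "0 < t" "t < tM" and q: "q \<in> M"
  shows "norm (p + v - q) ^ 2 \<ge> norm v ^ 2 + ((tM - t) / (tM + t)) * norm (q - p) ^ 2"
proof (cases "v = 0")
  case True
  have "(tM - t) / (tM + t) \<le> 1" using t by (simp add: divide_le_eq)
  then have "((tM - t) / (tM + t)) * norm (q - p) ^ 2 \<le> norm (q - p) ^ 2"
    using mult_left_le_one_le[of "norm (q - p) ^ 2" "(tM - t) / (tM + t)"] t by (simp add: mult.commute)
  then show ?thesis using True by (simp add: norm_minus_commute)
next
  case False
  have pM: "p \<in> M" and vn: "v \<in> normal_space M p" and nv: "norm v < t"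
    using pv unfolding mem_nb by simp_all
  define s where "s = (tM + t) / (2 * norm v)"
  have nvpos: "norm v > 0" using False by simp
  have spos: "s > 0" unfolding s_def using t nvpos by simp
  have wn: "s *\<^sub>R v \<in> normal_space M p" using vn by (simp add: normal_space_def)
  have nw: "norm (s *\<^sub>R v) = (tM + t) / 2" unfolding s_def using nvpos t by simp
  have pw: "(p, s *\<^sub>R v) \<in> normal_bundle M tM" unfolding mem_nb using pM wn nw t by simp
  have Mne: "M \<noteq> {}" using pM by auto
  obtain q0 where q0: "q0 \<in> M" "\<forall>z\<in>M. dist (p + s *\<^sub>R v) q0 \<le> dist (p + s *\<^sub>R v) z"
    using nearest_exists[OF cM Mne] by metis
  have "q0 = p" using nearest_unique[OF inj pw q0] .
  then have "dist (p + s *\<^sub>R v) p \<le> dist (p + s *\<^sub>R v) q" using q0 q by auto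
  then have "norm (s *\<^sub>R v) \<le> norm (s *\<^sub>R v - (q - p))"
    by (simp add: dist_norm algebra_simps)
  then have f1: "norm (s *\<^sub>R v) ^ 2 \<le> norm (s *\<^sub>R v - (q - p)) ^ 2"
    by (rule power_mono) simp
  have f2: "(s *\<^sub>R v) \<bullet> (q - p) = (norm (s *\<^sub>R v) ^ 2 + norm (q - p) ^ 2 - norm (s *\<^sub>R v - (q - p)) ^ 2) / 2"
    by (rule dot_norm_neg)
  have f3: "(s *\<^sub>R v) \<bullet> (q - p) = s * (v \<bullet> (q - p))" by simp
  have key: "2 * (s * (v \<bullet> (q - p))) \<le> norm (q - p) ^ 2"
    by (rule aux_ineq[OF f1 f2 f3])
  have exp: "norm (p + v - q) ^ 2 = norm v ^ 2 - 2 * (v \<bullet> (q - p)) + norm (q - p) ^ 2"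
  proof -
    have e: "norm (p + v - q) = norm (v - (q - p))" by (simp add: algebra_simps)
    have d: "v \<bullet> (q - p) = (norm v ^ 2 + norm (q - p) ^ 2 - norm (v - (q - p)) ^ 2) / 2"
      by (rule dot_norm_neg)
    show ?thesis unfolding e by (rule aux_eq[OF d])
  qed
  have "v \<bullet> (q - p) \<le> norm (q - p) ^ 2 / (2 * s)" using key spos by (simp add: field_simps)
  also have "norm (q - p) ^ 2 / (2 * s) = norm (q - p) ^ 2 * norm v / (tM + t)"
    unfolding s_def using nvpos t by (simp add: field_simps)
  also have "\<dots> \<le> norm (q - p) ^ 2 * t / (tM + t)"
    using nv t by (intro divide_right_mono mult_left_mono) auto
  finally have ineq: "v \<bullet> (q - p) \<le> norm (q - p) ^ 2 * t / (tM + t)" .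
  have "((tM - t) / (tM + t)) * norm (q - p) ^ 2 = norm (q - p) ^ 2 - 2 * (norm (q - p) ^ 2 * t / (tM + t))"
    using t by (simp add: field_simps)
  then show ?thesis by (rule aux_fin[OF _ exp ineq])
qed

lemma ereal_half_sq: "ereal (1/2) * (ereal a)^2 - ereal (1/2) * (ereal b)^2 = ereal (a^2/2 - b^2/2)"
  by (simp add: power2_eq_square)

lemma ereal_half_inf: "ereal (1/2) * (\<infinity>::ereal)^2 - ereal (1/2) * (ereal b)^2 = \<infinity>"
  by (simp add: power2_eq_square)

lemma aux_half: "(V::real) + c * e \<le> D \<Longrightarrow> 1/2 * c * e \<le> D / 2 - V / 2"
  by (simp add: field_simps)

theorem lemma5:
  fixes M :: "'a::euclidean_space set" and k :: nat and \<tau>M \<tau> \<eta> :: real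
  assumes "compact M" and "C2_submanifold k M"
    and "is_reach M \<tau>M" and "\<tau>M > 0"
    and "0 < \<tau>" and "\<tau> < \<tau>M" and "\<eta> > 0"
  shows "(INF x\<in>tube M \<tau>. ereal (1/2) * (dist_set (M - ball (proj M x) \<eta>) x)^2
                          - ereal (1/2) * (dist_set M x)^2)
           \<ge> ereal (1/2 * ((\<tau>M - \<tau>) / (\<tau>M + \<tau>)) * \<eta>^2)
       \<and> 1/2 * ((\<tau>M - \<tau>) / (\<tau>M + \<tau>)) * \<eta>^2 > 0"
proof
  have cpos: "(\<tau>M - \<tau>) / (\<tau>M + \<tau>) > 0" using assms by simp
  show "1/2 * ((\<tau>M - \<tau>) / (\<tau>M + \<tau>)) * \<eta>^2 > 0" using cpos assms by simp
  have inj: "inj_on (\<lambda>(p, v). p + v) (normal_bundle M \<tau>M)"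
    using assms(3) unfolding is_reach_def tube_diffeo_def by blast
  show "(INF x\<in>tube M \<tau>. ereal (1/2) * (dist_set (M - ball (proj M x) \<eta>) x)^2
                          - ereal (1/2) * (dist_set M x)^2)
           \<ge> ereal (1/2 * ((\<tau>M - \<tau>) / (\<tau>M + \<tau>)) * \<eta>^2)"
  proof (rule INF_greatest)
    fix x assume "x \<in> tube M \<tau>"
    then obtain p v where pv: "(p, v) \<in> normal_bundle M \<tau>" and x: "x = p + v"
      unfolding tube_def by auto
    have pM: "p \<in> M" and vn: "v \<in> normal_space M p" and nv: "norm v < \<tau>"
      using pv unfolding mem_nb by simp_all
    have pv': "(p, v) \<in> normal_bundle M \<tau>M" unfolding mem_nb using pM vn nv assms by simp
    have Mne: "M \<noteq> {}" using pM by auto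
    obtain q0 where q0: "q0 \<in> M" "\<forall>z\<in>M. dist (p + v) q0 \<le> dist (p + v) z"
      "infdist (p + v) M = dist (p + v) q0"
      using nearest_exists[OF assms(1) Mne] by metis
    have "q0 = p" using nearest_unique[OF inj pv' q0(1) q0(2)] .
    then have dM: "infdist (p + v) M = norm v" using q0(3) by (simp add: dist_norm)
    have prj: "proj M (p + v) = p"
      unfolding proj_def
    proof (rule the_equality)
      show "p \<in> M \<and> dist (p + v) p = infdist (p + v) M" using pM dM by (simp add: dist_norm)
    next
      fix y assume y: "y \<in> M \<and> dist (p + v) y = infdist (p + v) M"
      then have "\<forall>z\<in>M. dist (p + v) y \<le> dist (p + v) z" using infdist_le by metis
      then show "y = p" using nearest_unique[OF inj pv'] y by blast
    qed
    define A where "A = M - ball p \<eta>"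
    have dsM: "dist_set M x = ereal (norm v)" unfolding dist_set_def x using Mne dM by simp
    show "ereal (1/2 * ((\<tau>M - \<tau>) / (\<tau>M + \<tau>)) * \<eta>^2) \<le>
        ereal (1/2) * (dist_set (M - ball (proj M x) \<eta>) x)^2 - ereal (1/2) * (dist_set M x)^2"
    proof (cases "A = {}")
      case True
      then have "dist_set (M - ball (proj M x) \<eta>) x = \<infinity>"
        unfolding dist_set_def x prj A_def by simp
      then show ?thesis unfolding dsM ereal_half_inf by simp
    next
      case False
      have "closed A" unfolding A_def using assms(1) by (intro closed_Diff compact_imp_closed) auto
      then obtain q1 where q1: "q1 \<in> A" "infdist (p + v) A = dist (p + v) q1"
        using infdist_attains_inf[OF _ False] by metis
      have q1M: "q1 \<in> M" and q1d: "dist p q1 \<ge> \<eta>" using q1(1) unfolding A_def by auto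
      have F: "norm (p + v - q1) ^ 2 \<ge> norm v ^ 2 + ((\<tau>M - \<tau>) / (\<tau>M + \<tau>)) * norm (q1 - p) ^ 2"
        by (rule federer[OF assms(1) inj pv assms(5) assms(6) q1M])
      have "\<eta> ^ 2 \<le> norm (q1 - p) ^ 2"
        using q1d assms(7) by (intro power_mono) (auto simp: dist_norm norm_minus_commute)
      then have "((\<tau>M - \<tau>) / (\<tau>M + \<tau>)) * \<eta> ^ 2 \<le> ((\<tau>M - \<tau>) / (\<tau>M + \<tau>)) * norm (q1 - p) ^ 2"
        using cpos by (intro mult_left_mono) auto
      then have G: "norm v ^ 2 + ((\<tau>M - \<tau>) / (\<tau>M + \<tau>)) * \<eta> ^ 2 \<le> norm (p + v - q1) ^ 2"
        using F by linarith
      have "dist_set (M - ball (proj M x) \<eta>) x = ereal (norm (p + v - q1))"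
        unfolding dist_set_def x prj using False q1(2) by (simp add: A_def[symmetric] dist_norm)
      moreover have "1/2 * ((\<tau>M - \<tau>) / (\<tau>M + \<tau>)) * \<eta>^2 \<le> norm (p + v - q1) ^ 2 / 2 - norm v ^ 2 / 2"
        by (rule aux_half[OF G])
      ultimately show ?thesis unfolding dsM ereal_half_sq by simp
    qed
  qed
qed

end
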